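(* Let $H$ be a Hilbert space and $T$ a densely defined closed operator on $H$ with closed range. The following are equivalent: (1) $T$ is selfadjoint; (2) $T=\overline{w(T^{*})T}\,T^{*}$; (3) $T^{*}=TT^{*}w(T)$.
   Context: For a densely defined closed operator $A$ with closed range, $A^{*}$ is its adjoint, $C(A)=D(A)\cap N(A)^{\perp}$, and the Moore–Penrose inverse $A^{\dagger}$ is defined on $R(A)\oplus^{\perp}R(A)^{\perp}$ by $A^{\dagger}y=(A|_{C(A)})^{-1}y$ for $y\in R(A)$ and $A^{\dagger}y=0$ for $y\in R(A)^{\perp}$. The generalized Cauchy dual is $w(A)=A(A^{*}A)^{\dagger}$; products of operators are on natural domains, and $\overline{B}$ is the closure of a closable operator $B$. *)

theory Defs
  imports "HOL-Analysis.Analysis"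
begin

text \<open>HOL-Analysis only provides real inner product spaces, so we introduce
complex vector spaces and complex Hilbert spaces as type classes.  The inner
product is conjugate-linear in the first and linear in the second argument.\<close>

class complex_vector = real_vector +
  fixes scaleC :: "complex \<Rightarrow> 'a \<Rightarrow> 'a"
  assumes scaleC_add_right: "scaleC a (x + y) = scaleC a x + scaleC a y"
    and scaleC_add_left: "scaleC (a + b) x = scaleC a x + scaleC b x"
    and scaleC_scaleC: "scaleC a (scaleC b x) = scaleC (a * b) x"
    and scaleC_one: "scaleC 1 x = x"
    and scaleR_scaleC: "scaleR r x = scaleC (complex_of_real r) x"

class complex_hilbert_space = complex_vector + banach +
  fixes cinner :: "'a \<Rightarrow> 'a \<Rightarrow> complex"
  assumes cinner_commute: "cinner x y = cnj (cinner y x)"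
    and cinner_add_right: "cinner x (y + z) = cinner x y + cinner x z"
    and cinner_scaleC_right: "cinner x (scaleC a y) = a * cinner x y"
    and norm_eq_sqrt_cinner: "norm x = sqrt (Re (cinner x x))"

type_synonym 'a lop = "('a \<times> 'a) set"

definition is_operator :: "('a::complex_vector) lop \<Rightarrow> bool" where
  "is_operator G \<longleftrightarrow> (0, 0) \<in> G
     \<and> (\<forall>x y u v. (x, y) \<in> G \<longrightarrow> (u, v) \<in> G \<longrightarrow> (x + u, y + v) \<in> G)
     \<and> (\<forall>c x y. (x, y) \<in> G \<longrightarrow> (scaleC c x, scaleC c y) \<in> G)
     \<and> (\<forall>y. (0, y) \<in> G \<longrightarrow> y = 0)"

definition densely_defined :: "('a::complex_hilbert_space) lop \<Rightarrow> bool" where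
  "densely_defined G \<longleftrightarrow> closure (Domain G) = UNIV"

definition closed_operator :: "('a::complex_hilbert_space) lop \<Rightarrow> bool" where
  "closed_operator G \<longleftrightarrow> is_operator G \<and> closed G"

definition closable :: "('a::complex_hilbert_space) lop \<Rightarrow> bool" where
  "closable G \<longleftrightarrow> is_operator G \<and> is_operator (closure G)"

definition op_closure :: "('a::complex_hilbert_space) lop \<Rightarrow> 'a lop" where
  "op_closure G = closure G"

definition kernel :: "('a::complex_vector) lop \<Rightarrow> 'a set" where
  "kernel G = {x. (x, 0) \<in> G}"

definition orth :: "('a::complex_hilbert_space) set \<Rightarrow> 'a set" where
  "orth S = {z. \<forall>s\<in>S. cinner s z = 0}"

definition op_adjoint :: "('a::complex_hilbert_space) lop \<Rightarrow> 'a lop" where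
  "op_adjoint G = {(y, z). \<forall>x w. (x, w) \<in> G \<longrightarrow> cinner w y = cinner x z}"

definition op_comp :: "'a lop \<Rightarrow> 'a lop \<Rightarrow> 'a lop" where
  "op_comp A B = {(x, z). \<exists>y. (x, y) \<in> B \<and> (y, z) \<in> A}"

definition carrier_op :: "('a::complex_hilbert_space) lop \<Rightarrow> 'a set" where
  "carrier_op A = Domain A \<inter> orth (kernel A)"

text \<open>Moore-Penrose inverse, defined on R(A) \<oplus> R(A)^\<perp>:
  A^\<dagger>(y + z) = (A|C(A))^{-1} y for y in R(A), z in R(A)^\<perp>.\<close>
definition mp_inverse :: "('a::complex_hilbert_space) lop \<Rightarrow> 'a lop" where
  "mp_inverse A = {(y + z, x) | x y z. x \<in> carrier_op A \<and> (x, y) \<in> A \<and> z \<in> orth (Range A)}"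

text \<open>Generalized Cauchy dual w(A) = A (A*A)^\<dagger>.\<close>
definition cauchy_dual :: "('a::complex_hilbert_space) lop \<Rightarrow> 'a lop" where
  "cauchy_dual A = op_comp A (mp_inverse (op_comp (op_adjoint A) A))"

definition selfadjoint :: "('a::complex_hilbert_space) lop \<Rightarrow> bool" where
  "selfadjoint A \<longleftrightarrow> op_adjoint A = A"

end

theory Submission
  imports Defs
begin


lemma cinner_add_left: "cinner (x + y) z = cinner x z + cinner (y::'a::complex_hilbert_space) z"
  by (metis cinner_commute cinner_add_right complex_cnj_add)

lemma cinner_scaleC_left: "cinner (scaleC a x) (y::'a::complex_hilbert_space) = cnj a * cinner x y"
  by (metis cinner_commute cinner_scaleC_right complex_cnj_mult complex_cnj_cnj)

lemma cinner_zero_right [simp]: "cinner (x::'a::complex_hilbert_space) 0 = 0"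
  using cinner_add_right[of x 0 0] by simp

lemma cinner_zero_left [simp]: "cinner 0 (x::'a::complex_hilbert_space) = 0"
  by (metis cinner_commute cinner_zero_right complex_cnj_zero)

lemma cinner_minus_right: "cinner (x::'a::complex_hilbert_space) (- y) = - cinner x y"
  using cinner_add_right[of x y "-y"] by (simp add: add_eq_0_iff)

lemma cinner_minus_left: "cinner (- x) (y::'a::complex_hilbert_space) = - cinner x y"
  using cinner_add_left[of x "-x" y] by (simp add: add_eq_0_iff)

lemma cinner_diff_right: "cinner (x::'a::complex_hilbert_space) (y - z) = cinner x y - cinner x z"
  using cinner_add_right[of x y "-z"] by (simp add: cinner_minus_right)

lemma cinner_diff_left: "cinner (x - y) (z::'a::complex_hilbert_space) = cinner x z - cinner y z"
  using cinner_add_left[of x "-y" z] by (simp add: cinner_minus_left)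

lemma cinner_scaleR_right: "cinner (x::'a::complex_hilbert_space) (scaleR r y) = of_real r * cinner x y"
  by (simp add: scaleR_scaleC cinner_scaleC_right)

lemma cinner_scaleR_left: "cinner (scaleR r x) (y::'a::complex_hilbert_space) = of_real r * cinner x y"
  by (simp add: scaleR_scaleC cinner_scaleC_left)

lemma norm_sq_cinner: "(norm (x::'a::complex_hilbert_space))^2 = Re (cinner x x)"
proof -
  have "0 \<le> sqrt (Re (cinner x x))" using norm_eq_sqrt_cinner[of x] by (metis norm_ge_zero)
  then have "0 \<le> Re (cinner x x)" by simp
  then show ?thesis by (simp add: norm_eq_sqrt_cinner[of x])
qed

lemma cinner_self_Im: "Im (cinner (x::'a::complex_hilbert_space) x) = 0"
proof -
  have "cinner x x = cnj (cinner x x)" by (rule cinner_commute)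
  then have "Im (cinner x x) = Im (cnj (cinner x x))" by simp
  then have "Im (cinner x x) = - Im (cinner x x)" by simp
  then show ?thesis by simp
qed

lemma cinner_self: "cinner (x::'a::complex_hilbert_space) x = complex_of_real ((norm x)^2)"
  by (simp add: complex_eq_iff norm_sq_cinner cinner_self_Im)

lemma cinner_self_eq_zero [simp]: "cinner (x::'a::complex_hilbert_space) x = 0 \<longleftrightarrow> x = 0"
  by (simp add: cinner_self)

lemma norm_scaleC: "norm (scaleC c (x::'a::complex_hilbert_space)) = cmod c * norm x"
proof -
  have "cinner (scaleC c x) (scaleC c x) = (cnj c * c) * cinner x x"
    by (simp add: cinner_scaleC_left cinner_scaleC_right mult.assoc)
  also have "cnj c * c = complex_of_real ((cmod c)^2)" by (metis complex_norm_square mult.commute of_real_power)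
  also have "complex_of_real ((cmod c)^2) * cinner x x = complex_of_real ((cmod c * norm x)^2)"
    by (simp add: cinner_self power_mult_distrib)
  finally have "(norm (scaleC c x))^2 = (cmod c * norm x)^2" by (simp add: norm_sq_cinner)
  then show ?thesis by (rule power2_eq_imp_eq) auto
qed

lemma pythag: "cinner u v = 0 \<Longrightarrow> (norm (u + v))^2 = (norm u)^2 + (norm (v::'a::complex_hilbert_space))^2"
proof -
  assume a: "cinner u v = 0"
  then have b: "cinner v u = 0" by (metis cinner_commute complex_cnj_zero)
  show ?thesis by (simp add: norm_sq_cinner cinner_add_left cinner_add_right a b)
qed

lemma orth_step: "u \<noteq> 0 \<Longrightarrow> cinner u (e - scaleC (cinner u e / cinner u u) u) = 0"
  for u e :: "'a::complex_hilbert_space"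
  by (simp add: cinner_diff_right cinner_scaleC_right)

lemma cauchy_schwarz: "cmod (cinner x y) \<le> norm x * norm (y::'a::complex_hilbert_space)"
proof (cases "x = 0")
  case True then show ?thesis by simp
next
  case False
  define t where "t = cinner x y / cinner x x"
  define r where "r = y - scaleC t x"
  have r0: "cinner x r = 0" using orth_step[OF False, of y] by (simp add: r_def t_def)
  have "cinner r (scaleC t x) = 0"
    by (metis cinner_scaleC_right cinner_commute r0 complex_cnj_zero mult_zero_right)
  then have "(norm y)^2 = (norm r)^2 + (norm (scaleC t x))^2"
    using pythag[of r "scaleC t x"] by (simp add: r_def)
  then have "(cmod t * norm x)^2 \<le> (norm y)^2" by (simp add: norm_scaleC)
  then have 1: "cmod t * norm x \<le> norm y" by (rule power2_le_imp_le) simp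
  have nx: "norm x > 0" using False by simp
  have "cmod t = cmod (cinner x y) / (norm x)^2"
    by (simp add: t_def cinner_self norm_divide norm_power)
  then have "cmod (cinner x y) = cmod t * norm x * norm x" using nx by (simp add: power2_eq_square)
  also have "\<dots> \<le> norm y * norm x" using 1 nx by (simp add: mult_right_mono)
  finally show ?thesis by (simp add: mult.commute)
qed

lemma bb_cinner: "bounded_bilinear (cinner :: 'a::complex_hilbert_space \<Rightarrow> 'a \<Rightarrow> complex)"
proof
  fix a a' b b' :: 'a and r :: real
  show "cinner (a + a') b = cinner a b + cinner a' b" by (rule cinner_add_left)
  show "cinner a (b + b') = cinner a b + cinner a b'" by (rule cinner_add_right)
  show "cinner (r *\<^sub>R a) b = r *\<^sub>R cinner a b" by (simp add: cinner_scaleR_left scaleR_conv_of_real)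
  show "cinner a (r *\<^sub>R b) = r *\<^sub>R cinner a b" by (simp add: cinner_scaleR_right scaleR_conv_of_real)
  show "\<exists>K. \<forall>a b::'a. norm (cinner a b) \<le> norm a * norm b * K"
    by (rule exI[of _ 1]) (simp add: cauchy_schwarz)
qed

lemma continuous_on_cinner [continuous_intros]:
  fixes f g :: "'b::topological_space \<Rightarrow> 'a::complex_hilbert_space"
  shows "continuous_on S f \<Longrightarrow> continuous_on S g \<Longrightarrow> continuous_on S (\<lambda>x. cinner (f x) (g x))"
  by (rule bounded_bilinear.continuous_on[OF bb_cinner])

lemma tendsto_cinner [tendsto_intros]:
  fixes f g :: "'b \<Rightarrow> 'a::complex_hilbert_space"
  shows "(f \<longlongrightarrow> a) F \<Longrightarrow> (g \<longlongrightarrow> b) F \<Longrightarrow> ((\<lambda>x. cinner (f x) (g x)) \<longlongrightarrow> cinner a b) F"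
  by (rule bounded_bilinear.tendsto[OF bb_cinner])

lemma closed_orth: "closed (orth S)"
proof -
  have "orth S = (\<Inter>s\<in>S. {z. cinner s z = 0})" by (auto simp: orth_def)
  moreover have "closed {z. cinner s z = 0}" for s :: 'a
    by (rule closed_Collect_eq[OF continuous_on_cinner[OF continuous_on_const continuous_on_id] continuous_on_const])
  ultimately show ?thesis by (metis (no_types, lifting) closed_INT)
qed



definition csub :: "'a::complex_vector set \<Rightarrow> bool" where
  "csub M \<longleftrightarrow> 0 \<in> M \<and> (\<forall>x\<in>M. \<forall>y\<in>M. x + y \<in> M) \<and> (\<forall>c. \<forall>x\<in>M. scaleC c x \<in> M)"

lemma csub_0: "csub M \<Longrightarrow> 0 \<in> M" by (simp add: csub_def)
lemma csub_add: "csub M \<Longrightarrow> x \<in> M \<Longrightarrow> y \<in> M \<Longrightarrow> x + y \<in> M" by (simp add: csub_def)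
lemma csub_scaleC: "csub M \<Longrightarrow> x \<in> M \<Longrightarrow> scaleC c x \<in> M" by (simp add: csub_def)
lemma csub_scaleR: "csub M \<Longrightarrow> x \<in> M \<Longrightarrow> scaleR r x \<in> M" by (simp add: csub_def scaleR_scaleC)
lemma csub_minus: "csub M \<Longrightarrow> x \<in> M \<Longrightarrow> - x \<in> M"
  using csub_scaleR[of M x "-1"] by simp
lemma csub_diff: "csub M \<Longrightarrow> x \<in> M \<Longrightarrow> y \<in> M \<Longrightarrow> x - y \<in> M"
  using csub_add[of M x "-y"] csub_minus[of M y] by simp

lemma parallelogram: "(norm (a + b))^2 + (norm (a - b))^2 = 2 * (norm a)^2 + 2 * (norm (b::'a::complex_hilbert_space))^2"
  by (simp add: norm_sq_cinner cinner_add_left cinner_add_right cinner_diff_left cinner_diff_right)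

lemma orth_csub: "csub (orth S)"
  by (auto simp: csub_def orth_def cinner_add_right cinner_scaleC_right)

lemma projection_exists:
  fixes M :: "'a::complex_hilbert_space set"
  assumes sub: "csub M" and cl: "closed M"
  shows "\<exists>m\<in>M. x - m \<in> orth M"
proof -
  define D where "D = (\<lambda>m. (norm (x - m))^2) ` M"
  define d where "d = Inf D"
  have ne: "D \<noteq> {}" using csub_0[OF sub] by (auto simp: D_def)
  have bdd: "bdd_below D" unfolding D_def bdd_below_def by (rule exI[of _ 0]) auto
  have low: "d \<le> (norm (x - m))^2" if "m \<in> M" for m
    unfolding d_def by (rule cInf_lower) (use that bdd in \<open>auto simp: D_def\<close>)
  have "\<exists>m\<in>M. (norm (x - m))^2 < d + inverse (real (Suc n))" for n
  proof -
    have "Inf D < d + inverse (real (Suc n))" by (simp add: d_def)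
    then show ?thesis using cInf_less_iff[OF ne bdd] by (auto simp: D_def)
  qed
  then obtain mm where mmM: "\<And>n. mm n \<in> M"
    and mmd: "\<And>n. (norm (x - mm n))^2 < d + inverse (real (Suc n))"
    by metis
  have key: "(norm (mm n - mm k))^2 \<le> 2 * inverse (real (Suc n)) + 2 * inverse (real (Suc k))" for n k
  proof -
    define a where "a = x - mm n"
    define b where "b = x - mm k"
    have mid: "scaleR (1/2) (mm n + mm k) \<in> M"
      by (intro csub_scaleR csub_add sub mmM)
    have "a + b = scaleR 2 (x - scaleR (1/2) (mm n + mm k))"
      by (simp add: a_def b_def algebra_simps scaleR_2)
    then have "(norm (a + b))^2 = 4 * (norm (x - scaleR (1/2) (mm n + mm k)))^2"
      by (simp add: power_mult_distrib)
    then have 1: "4 * d \<le> (norm (a + b))^2" using low[OF mid] by simp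
    have "a - b = mm k - mm n" by (simp add: a_def b_def)
    then have "(norm (mm n - mm k))^2 = (norm (a - b))^2" by (simp add: norm_minus_commute)
    also have "\<dots> = 2 * (norm a)^2 + 2 * (norm b)^2 - (norm (a + b))^2"
      using parallelogram[of a b] by simp
    finally show ?thesis using 1 mmd[of n] mmd[of k] by (simp add: a_def b_def)
  qed
  have "Cauchy mm"
  proof (rule metric_CauchyI)
    fix e :: real assume e: "0 < e"
    obtain N where N: "inverse (real (Suc N)) < e^2 / 4"
      using reals_Archimedean[of "e^2/4"] e by auto
    show "\<exists>M. \<forall>m\<ge>M. \<forall>n\<ge>M. dist (mm m) (mm n) < e"
    proof (intro exI allI impI)
      fix m n assume "N \<le> m" "N \<le> n"
      then have "inverse (real (Suc m)) \<le> inverse (real (Suc N))" "inverse (real (Suc n)) \<le> inverse (real (Suc N))"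
        by (auto intro!: le_imp_inverse_le)
      moreover have "(dist (mm m) (mm n))^2 \<le> 2 * inverse (real (Suc m)) + 2 * inverse (real (Suc n))"
        using key[of m n] by (simp only: dist_norm)
      ultimately have "(dist (mm m) (mm n))^2 < e^2"
        using N by linarith
      then show "dist (mm m) (mm n) < e" using e by (metis power2_less_imp_less less_imp_le)
    qed
  qed
  then obtain m where lim: "mm \<longlonglongrightarrow> m" using Cauchy_convergent_iff convergent_def by blast
  have mM: "m \<in> M" using closed_sequentially[OF cl mmM lim] .
  have "(norm (x - m))^2 \<le> d"
  proof (rule LIMSEQ_le)
    show "(\<lambda>n. (norm (x - mm n))^2) \<longlonglongrightarrow> (norm (x - m))^2"
      by (intro tendsto_intros lim)
    show "(\<lambda>n. d + inverse (real (Suc n))) \<longlonglongrightarrow> d"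
      using tendsto_add[OF tendsto_const LIMSEQ_inverse_real_of_nat, of d] by simp
    show "\<exists>N. \<forall>n\<ge>N. (norm (x - mm n))^2 \<le> d + inverse (real (Suc n))"
      using mmd less_imp_le by blast
  qed
  then have best: "(norm (x - m))^2 \<le> (norm (x - m'))^2" if "m' \<in> M" for m'
    using low[OF that] by linarith
  have "x - m \<in> orth M"
    unfolding orth_def
  proof (intro CollectI ballI)
    fix u assume uM: "u \<in> M"
    show "cinner u (x - m) = 0"
    proof (cases "u = 0")
      case True then show ?thesis by simp
    next
      case False
      define e where "e = x - m"
      define t where "t = cinner u e / cinner u u"
      define v where "v = e - scaleC t u"
      have uv: "cinner u v = 0" using orth_step[OF False, of e] by (simp add: v_def t_def)
      have "cinner v (scaleC t u) = 0"
        by (metis cinner_scaleC_right cinner_commute uv complex_cnj_zero mult_zero_right)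
      then have "(norm e)^2 = (norm v)^2 + (norm (scaleC t u))^2"
        using pythag[of v "scaleC t u"] by (simp add: v_def)
      moreover have "(norm e)^2 \<le> (norm v)^2"
      proof -
        have "m + scaleC t u \<in> M" by (intro csub_add csub_scaleC sub mM uM)
        from best[OF this] show ?thesis by (simp add: e_def v_def algebra_simps)
      qed
      ultimately have "norm (scaleC t u) = 0" by simp
      then have "t = 0" using False by (simp add: norm_scaleC)
      then show ?thesis using False by (simp add: t_def e_def)
    qed
  qed
  with mM show ?thesis by blast
qed

lemma orth_orth: 
  fixes N :: "'a::complex_hilbert_space set"
  assumes "csub N" "closed N"
  shows "orth (orth N) = N"
proof
  show "N \<subseteq> orth (orth N)"
    by (auto simp: orth_def) (metis cinner_commute complex_cnj_zero)
  show "orth (orth N) \<subseteq> N"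
  proof
    fix z assume z: "z \<in> orth (orth N)"
    obtain n where n: "n \<in> N" "z - n \<in> orth N" using projection_exists[OF assms, of z] by blast
    have "cinner (z - n) z = 0" using z n(2) by (auto simp: orth_def)
    moreover have "cinner (z - n) n = 0" using n by (auto simp: orth_def) (metis cinner_commute complex_cnj_zero)
    ultimately have "cinner (z - n) (z - n) = 0" by (simp add: cinner_diff_right)
    then show "z \<in> N" using n by simp
  qed
qed

lemma orth_inter: "x \<in> S \<Longrightarrow> x \<in> orth S \<Longrightarrow> x = 0"
  by (auto simp: orth_def)

section \<open>Product spaces\<close>

instantiation prod :: (complex_vector, complex_vector) complex_vector
begin
definition scaleC_prod_def: "scaleC c x = (scaleC c (fst x), scaleC c (snd x))"
instance
  by standard (auto simp: scaleC_prod_def scaleC_add_right scaleC_add_left scaleC_scaleC scaleC_one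
      scaleR_prod_def scaleR_scaleC)
end

instantiation prod :: (complex_hilbert_space, complex_hilbert_space) complex_hilbert_space
begin
definition cinner_prod_def: "cinner x y = cinner (fst x) (fst y) + cinner (snd x) (snd y)"
instance
proof
  fix x y z :: "'a \<times> 'b" and a :: complex
  show "cinner x y = cnj (cinner y x)" by (simp add: cinner_prod_def) (metis cinner_commute)
  show "cinner x (y + z) = cinner x y + cinner x z" by (simp add: cinner_prod_def cinner_add_right)
  show "cinner x (scaleC a y) = a * cinner x y"
    by (simp add: cinner_prod_def scaleC_prod_def cinner_scaleC_right distrib_left)
  show "norm x = sqrt (Re (cinner x x))"
    by (cases x) (simp add: cinner_prod_def norm_Pair norm_sq_cinner)
qed
end

lemma scaleC_Pair [simp]: "scaleC c (a, b) = (scaleC c a, scaleC c b)"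
  by (simp add: scaleC_prod_def)

lemma cinner_Pair [simp]: "cinner (a, b) (c, d) = cinner a c + cinner b d"
  by (simp add: cinner_prod_def)



lemma scaleC_minus1: "scaleC (-1) (x::'a::complex_vector) = - x"
  by (metis scaleR_scaleC scaleR_minus1_left of_real_minus of_real_1)

lemma op_zero: "is_operator G \<Longrightarrow> (0, 0) \<in> G" by (simp add: is_operator_def)
lemma op_add: "is_operator G \<Longrightarrow> (x, y) \<in> G \<Longrightarrow> (u, v) \<in> G \<Longrightarrow> (x + u, y + v) \<in> G"
  by (simp add: is_operator_def)
lemma op_scaleC: "is_operator G \<Longrightarrow> (x, y) \<in> G \<Longrightarrow> (scaleC c x, scaleC c y) \<in> G"
  by (simp add: is_operator_def)
lemma op_minus: "is_operator G \<Longrightarrow> (x, y) \<in> G \<Longrightarrow> (- x, - y) \<in> G"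
  using op_scaleC[of G x y "-1"] by (simp add: scaleC_minus1)
lemma op_diff: "is_operator G \<Longrightarrow> (x, y) \<in> G \<Longrightarrow> (u, v) \<in> G \<Longrightarrow> (x - u, y - v) \<in> G"
  using op_add[of G x y "-u" "-v"] op_minus[of G u v] by simp
lemma op_scaleR: "is_operator G \<Longrightarrow> (x, y) \<in> G \<Longrightarrow> (scaleR r x, scaleR r y) \<in> G"
  by (simp add: scaleR_scaleC op_scaleC)
lemma op_single: "is_operator G \<Longrightarrow> (x, y) \<in> G \<Longrightarrow> (x, y') \<in> G \<Longrightarrow> y = y'"
proof -
  assume a: "is_operator G" "(x, y) \<in> G" "(x, y') \<in> G"
  have "(0, y - y') \<in> G" using op_diff[OF a] by simp
  then have "y - y' = 0" using a(1) unfolding is_operator_def by blast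
  then show ?thesis by simp
qed

lemma scaleC_zero [simp]: "scaleC c (0::'a::complex_vector) = 0"
proof -
  have "scaleC c (0::'a) = scaleC c 0 + scaleC c 0" using scaleC_add_right[of c 0 0] by simp
  then show ?thesis by simp
qed

lemma csub_kernel: assumes "is_operator G" shows "csub (kernel G)"
proof -
  have "(x + y, 0) \<in> G" if "(x, 0) \<in> G" "(y, 0) \<in> G" for x y
    using op_add[OF assms that] by simp
  moreover have "(scaleC c x, 0) \<in> G" if "(x, 0) \<in> G" for x c
    using op_scaleC[OF assms that] by simp
  ultimately show ?thesis using op_zero[OF assms] by (simp add: csub_def kernel_def)
qed

lemma csub_Range: assumes "is_operator G" shows "csub (Range G)"
proof -
  have "x + y \<in> Range G" if h: "x \<in> Range G" "y \<in> Range G" for x y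
  proof -
    obtain a b where "(a, x) \<in> G" "(b, y) \<in> G" using h by blast
    from op_add[OF assms this] show ?thesis by blast
  qed
  moreover have "scaleC c x \<in> Range G" if h: "x \<in> Range G" for x c
  proof -
    obtain a where "(a, x) \<in> G" using h by blast
    from op_scaleC[OF assms this] show ?thesis by blast
  qed
  ultimately show ?thesis using op_zero[OF assms] unfolding csub_def by blast
qed

lemma csub_Domain: assumes "is_operator G" shows "csub (Domain G)"
proof -
  have "x + y \<in> Domain G" if h: "x \<in> Domain G" "y \<in> Domain G" for x y
  proof -
    obtain a b where "(x, a) \<in> G" "(y, b) \<in> G" using h by blast
    from op_add[OF assms this] show ?thesis by blast
  qed
  moreover have "scaleC c x \<in> Domain G" if h: "x \<in> Domain G" for x c
  proof -
    obtain a where "(x, a) \<in> G" using h by blast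
    from op_scaleC[OF assms this] show ?thesis by blast
  qed
  ultimately show ?thesis using op_zero[OF assms] unfolding csub_def by blast
qed

lemma csub_graph: assumes "is_operator G" shows "csub G"
proof -
  have "p + q \<in> G" if "p \<in> G" "q \<in> G" for p q
    using op_add[OF assms, of "fst p" "snd p" "fst q" "snd q"] that by (simp add: plus_prod_def)
  moreover have "scaleC c p \<in> G" if "p \<in> G" for p c
    using op_scaleC[OF assms, of "fst p" "snd p" c] that by (simp add: scaleC_prod_def)
  ultimately show ?thesis using op_zero[OF assms] unfolding csub_def zero_prod_def by blast
qed

lemma closed_pre: "closed S \<Longrightarrow> continuous_on UNIV f \<Longrightarrow> closed (f -` S)"
  by (simp add: closed_vimage)

lemma closed_kernel: "closed G \<Longrightarrow> closed (kernel G)"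
proof -
  assume "closed G"
  have "kernel G = (\<lambda>x. (x, 0)) -` G" by (auto simp: kernel_def)
  moreover have "closed ((\<lambda>x::'a. (x, 0::'a)) -` G)"
    by (rule closed_pre[OF \<open>closed G\<close>]) (intro continuous_intros)
  ultimately show ?thesis by simp
qed

lemma closed_adjoint: "closed (op_adjoint G)"
proof -
  have "op_adjoint G = (\<Inter>p\<in>G. {q. cinner (snd p) (fst q) = cinner (fst p) (snd q)})"
    by (auto simp: op_adjoint_def) (metis fst_conv snd_conv)
  moreover have "closed {q::'a\<times>'a. cinner (snd p) (fst q) = cinner (fst p) (snd q)}" for p :: "'a \<times> 'a"
    by (rule closed_Collect_eq; rule continuous_on_cinner[OF continuous_on_const]; intro continuous_intros)
  ultimately show ?thesis by (metis (no_types, lifting) closed_INT)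
qed

lemma adjoint_lin:
  shows "(0, 0) \<in> op_adjoint G"
    and "(y, z) \<in> op_adjoint G \<Longrightarrow> (y', z') \<in> op_adjoint G \<Longrightarrow> (y + y', z + z') \<in> op_adjoint G"
    and "(y, z) \<in> op_adjoint G \<Longrightarrow> (scaleC c y, scaleC c z) \<in> op_adjoint G"
  by (auto simp: op_adjoint_def cinner_add_right cinner_scaleC_right)

lemma orth_closure_dense: "closure S = UNIV \<Longrightarrow> z \<in> orth S \<Longrightarrow> z = (0::'a::complex_hilbert_space)"
proof -
  assume d: "closure S = UNIV" and z: "z \<in> orth S"
  have "S \<subseteq> {s. cinner s z = 0}" using z by (auto simp: orth_def)
  moreover have "closed {s. cinner s z = 0}"
    by (rule closed_Collect_eq[OF continuous_on_cinner[OF continuous_on_id continuous_on_const] continuous_on_const])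
  ultimately have "closure S \<subseteq> {s. cinner s z = 0}" by (rule closure_minimal)
  then have "z \<in> {s. cinner s z = 0}" using d by blast
  then show ?thesis by simp
qed

lemma adjoint_operator: "densely_defined G \<Longrightarrow> is_operator (op_adjoint G)"
proof -
  assume d: "densely_defined G"
  have "z = 0" if "(0, z) \<in> op_adjoint G" for z
  proof (rule orth_closure_dense)
    show "closure (Domain G) = UNIV" using d by (simp add: densely_defined_def)
    show "z \<in> orth (Domain G)" using that by (auto simp: orth_def op_adjoint_def)
  qed
  then show ?thesis unfolding is_operator_def using adjoint_lin by blast
qed

lemma subset_adjoint_adjoint: "G \<subseteq> op_adjoint (op_adjoint G)"
  by (auto simp: op_adjoint_def) (metis cinner_commute)

lemma adjoint_adjoint:
  assumes "closed_operator T"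
  shows "op_adjoint (op_adjoint T) = T"
proof
  show "T \<subseteq> op_adjoint (op_adjoint T)" by (rule subset_adjoint_adjoint)
  show "op_adjoint (op_adjoint T) \<subseteq> T"
  proof clarify
    fix y z assume yz: "(y, z) \<in> op_adjoint (op_adjoint T)"
    have op: "is_operator T" and cl: "closed T" using assms by (auto simp: closed_operator_def)
    obtain p where p: "p \<in> T" "(y, z) - p \<in> orth T"
      using projection_exists[OF csub_graph[OF op] cl, of "(y, z)"] by blast
    obtain x v where xv: "p = (x, v)" by (cases p)
    define a where "a = y - x"
    define b where "b = z - v"
    have ab: "cinner x' a + cinner v' b = 0" if "(x', v') \<in> T" for x' v'
      using p(2) that by (auto simp: orth_def xv a_def b_def)
    have bT: "(b, - a) \<in> op_adjoint T"
      unfolding op_adjoint_def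
    proof (clarify)
      fix x' v' assume "(x', v') \<in> T"
      then have "cinner x' a + cinner v' b = 0" by (rule ab)
      then show "cinner v' b = cinner x' (- a)" by (simp add: cinner_minus_right add_eq_0_iff)
    qed
    have 1: "cinner (- a) y = cinner b z" using yz bT by (auto simp: op_adjoint_def)
    have "(x, v) \<in> op_adjoint (op_adjoint T)" using p(1) xv subset_adjoint_adjoint by blast
    then have 2: "cinner (- a) x = cinner b v" using bT by (auto simp: op_adjoint_def)
    have "cinner (- a) a = cinner b b"
      using 1 2 by (simp add: a_def b_def cinner_diff_right)
    then have "Re (cinner (- a) a) = Re (cinner b b)" by simp
    then have "- Re (cinner a a) = Re (cinner b b)" by (simp add: cinner_minus_left)
    then have "(norm a)^2 + (norm b)^2 = 0" by (simp add: norm_sq_cinner)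
    then have "a = 0" "b = 0" by (simp_all add: sum_power2_eq_zero_iff)
    then show "(y, z) \<in> T" using p(1) xv by (simp add: a_def b_def)
  qed
qed

lemma op_comp_iff: "(x, z) \<in> op_comp A B \<longleftrightarrow> (\<exists>y. (x, y) \<in> B \<and> (y, z) \<in> A)"
  by (simp add: op_comp_def)

lemma single0: "is_operator G \<Longrightarrow> (0, y) \<in> G \<Longrightarrow> y = 0"
  by (simp add: is_operator_def)

lemma comp_operator:
  assumes A: "is_operator A" and B: "is_operator B"
  shows "is_operator (op_comp A B)"
proof -
  have z: "(0, 0) \<in> op_comp A B" using op_zero[OF A] op_zero[OF B] by (auto simp: op_comp_iff)
  have a: "(x + u, y + v) \<in> op_comp A B" if h: "(x, y) \<in> op_comp A B" "(u, v) \<in> op_comp A B" for x y u v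
  proof -
    obtain p q where pq: "(x, p) \<in> B" "(p, y) \<in> A" "(u, q) \<in> B" "(q, v) \<in> A" using h by (auto simp: op_comp_iff)
    have "(x + u, p + q) \<in> B" using op_add[OF B pq(1) pq(3)] .
    moreover have "(p + q, y + v) \<in> A" using op_add[OF A pq(2) pq(4)] .
    ultimately show ?thesis by (auto simp: op_comp_iff)
  qed
  have s: "(scaleC c x, scaleC c y) \<in> op_comp A B" if h: "(x, y) \<in> op_comp A B" for x y c
  proof -
    obtain p where pq: "(x, p) \<in> B" "(p, y) \<in> A" using h by (auto simp: op_comp_iff)
    have "(scaleC c x, scaleC c p) \<in> B" using op_scaleC[OF B pq(1)] .
    moreover have "(scaleC c p, scaleC c y) \<in> A" using op_scaleC[OF A pq(2)] .
    ultimately show ?thesis by (auto simp: op_comp_iff)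
  qed
  have o: "y = 0" if h: "(0, y) \<in> op_comp A B" for y
  proof -
    obtain p where pq: "(0, p) \<in> B" "(p, y) \<in> A" using h by (auto simp: op_comp_iff)
    then have "p = 0" using single0[OF B] by blast
    then show ?thesis using pq single0[OF A] by blast
  qed
  show ?thesis unfolding is_operator_def using z a s o by blast
qed



lemma om_iter:
  fixes T :: "'a::complex_hilbert_space lop"
  assumes op: "is_operator T" and cl: "closed T" and K: "0 \<le> K"
    and approx: "\<And>v e. v \<in> Range T \<Longrightarrow> e > 0 \<Longrightarrow> \<exists>x w. (x, w) \<in> T \<and> norm x \<le> K * norm v \<and> norm (v - w) < e"
    and v: "v \<in> Range T"
  shows "\<exists>x. (x, v) \<in> T \<and> norm x \<le> 2 * K * norm v"
proof (cases "v = 0")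
  case True
  then show ?thesis using op_zero[OF op] by auto
next
  case False
  let ?M = "Range T"
  let ?P = "\<lambda>r e p. (fst p, snd p) \<in> T \<and> norm (fst p) \<le> K * norm r \<and> norm (r - snd p) < e"
  define X where "X r e = fst (SOME p. ?P r e p)" for r e
  define W where "W r e = snd (SOME p. ?P r e p)" for r e
  have XW: "(X r e, W r e) \<in> T \<and> norm (X r e) \<le> K * norm r \<and> norm (r - W r e) < e"
    if h: "r \<in> ?M" "e > 0" for r e
  proof -
    obtain x w where "(x, w) \<in> T \<and> norm x \<le> K * norm r \<and> norm (r - w) < e" using approx[OF h] by blast
    then have "\<exists>p. ?P r e p" by (intro exI[of _ "(x, w)"]) simp
    from someI_ex[OF this] show ?thesis by (simp add: X_def W_def)
  qed
  define ee where "ee k = norm v / 2 ^ Suc k" for k :: nat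
  have ee: "ee k > 0" for k using False by (simp add: ee_def)
  define R where "R = rec_nat v (\<lambda>k rk. rk - W rk (ee k))"
  have R0: "R 0 = v" by (simp add: R_def)
  have RS: "R (Suc k) = R k - W (R k) (ee k)" for k by (simp add: R_def)
  define x where "x k = X (R k) (ee k)" for k
  define w where "w k = W (R k) (ee k)" for k
  have RM: "R k \<in> ?M" for k
  proof (induction k)
    case 0 then show ?case using v R0 by simp
  next
    case (Suc k)
    have "(X (R k) (ee k), W (R k) (ee k)) \<in> T" using XW[OF Suc ee] by blast
    then have "W (R k) (ee k) \<in> ?M" by blast
    then show ?case using Suc by (simp add: RS csub_diff[OF csub_Range[OF op]])
  qed
  have xw: "(x k, w k) \<in> T" "norm (x k) \<le> K * norm (R k)" "norm (R (Suc k)) < ee k" for k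
    using XW[OF RM ee, of k k] by (auto simp: x_def w_def RS)
  have Rb: "norm (R k) \<le> norm v * (1/2)^k" for k
  proof (cases k)
    case 0 then show ?thesis by (simp add: R0)
  next
    case (Suc j)
    have "norm (R k) < ee j" using xw(3)[of j] Suc by simp
    also have "ee j = norm v * (1/2)^k" by (simp add: ee_def Suc power_one_over divide_simps)
    finally show ?thesis by simp
  qed
  have xb: "norm (x k) \<le> K * norm v * (1/2)^k" for k
  proof -
    have "norm (x k) \<le> K * norm (R k)" by (rule xw(2))
    also have "\<dots> \<le> K * (norm v * (1/2)^k)" using Rb[of k] K by (rule mult_left_mono)
    finally show ?thesis by simp
  qed
  have sumT: "(\<Sum>k<n. x k, \<Sum>k<n. w k) \<in> T" for n
  proof (induction n)
    case 0 then show ?case using op_zero[OF op] by simp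
  next
    case (Suc n) then show ?case using op_add[OF op Suc xw(1)[of n]] by simp
  qed
  have sumw: "(\<Sum>k<n. w k) = v - R n" for n
    by (induction n) (simp_all add: R0 RS w_def)
  have gs: "summable (\<lambda>k. K * norm v * (1/2::real)^k)"
    by (intro summable_mult summable_geometric) simp
  have sx: "summable (\<lambda>k. norm (x k))"
    by (rule summable_comparison_test[OF _ gs]) (use xb in simp)
  then have sx': "summable x" by (rule summable_norm_cancel)
  have lim1: "(\<lambda>n. \<Sum>k<n. x k) \<longlonglongrightarrow> suminf x" by (rule summable_LIMSEQ[OF sx'])
  have "R \<longlonglongrightarrow> 0"
  proof (rule Lim_null_comparison)
    show "\<forall>\<^sub>F k in sequentially. norm (R k) \<le> norm v * (1/2)^k" using Rb by simp
    show "(\<lambda>k. norm v * (1/2::real)^k) \<longlonglongrightarrow> 0"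
      by (intro tendsto_mult_right_zero LIMSEQ_power_zero) simp
  qed
  then have "(\<lambda>n. v - R n) \<longlonglongrightarrow> v - 0" by (intro tendsto_intros)
  then have lim2: "(\<lambda>n. \<Sum>k<n. w k) \<longlonglongrightarrow> v" by (simp add: sumw)
  have inT: "(suminf x, v) \<in> T"
    using closed_sequentially[OF cl sumT tendsto_Pair[OF lim1 lim2]] .
  have "norm (suminf x) \<le> (\<Sum>k. norm (x k))" by (rule summable_norm[OF sx])
  also have "\<dots> \<le> (\<Sum>k. K * norm v * (1/2::real)^k)" by (rule suminf_le[OF xb sx gs])
  also have "\<dots> = K * norm v * (\<Sum>k. (1/2::real)^k)" by (rule suminf_mult) (rule summable_geometric, simp)
  also have "(\<Sum>k. (1/2::real)^k) = 2" using suminf_geometric[of "1/2::real"] by simp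
  finally show ?thesis using inT by (intro exI[of _ "suminf x"]) (simp add: mult_ac)
qed



lemma open_mapping:
  fixes T :: "'a::complex_hilbert_space lop"
  assumes op: "is_operator T" and cl: "closed T" and clR: "closed (Range T)"
  shows "\<exists>C. \<forall>v\<in>Range T. \<exists>x. (x, v) \<in> T \<and> norm x \<le> C * norm v"
proof -
  let ?M = "Range T"
  define S where "S n = {w. \<exists>x. (x, w) \<in> T \<and> norm x \<le> real n}" for n :: nat
  define A where "A n = closure (S n)" for n
  have AM: "A n \<subseteq> ?M" for n
    unfolding A_def by (rule closure_minimal) (auto simp: clR S_def)
  have UA: "\<Union>(range A) = ?M"
  proof
    show "\<Union>(range A) \<subseteq> ?M" using AM by blast
    show "?M \<subseteq> \<Union>(range A)"
    proof
      fix v assume "v \<in> ?M"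
      then obtain x where xv: "(x, v) \<in> T" by blast
      obtain n where "norm x \<le> real n" using real_arch_simple by blast
      then have "v \<in> S n" unfolding S_def using xv by blast
      then have "v \<in> A n" unfolding A_def by (rule closure_subset[THEN subsetD])
      then show "v \<in> \<Union>(range A)" by (rule UN_I[OF UNIV_I])
    qed
  qed
  let ?X = "top_of_set ?M"
  have cms: "completely_metrizable_space ?X"
    by (rule completely_metrizable_space_closedin[OF completely_metrizable_space_euclidean])
      (rule closed_closedin[THEN iffD1, OF clR])
  have clA: "closedin ?X (A n)" for n
  proof -
    have "closedin ?X (?M \<inter> A n)" by (rule closedin_closed_Int) (simp add: A_def)
    moreover have "?M \<inter> A n = A n" using AM by blast
    ultimately show ?thesis by simp
  qed
  have "\<exists>n. ?X interior_of (A n) \<noteq> {}"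
  proof (rule ccontr)
    assume "\<not> ?thesis"
    then have "?X interior_of (\<Union>(range A)) = {}"
      by (intro Baire_category_alt) (use cms clA in auto)
    moreover have "?X interior_of ?M = ?M"
      using interior_of_topspace[of ?X] by simp
    moreover have "(0::'a) \<in> ?M" using op_zero[OF op] by blast
    ultimately show False using UA by simp
  qed
  then obtain n v0 where v0: "v0 \<in> ?X interior_of (A n)" by blast
  then obtain U where U: "openin ?X U" "v0 \<in> U" "U \<subseteq> A n" by (auto simp: interior_of_def)
  obtain Ob where O: "open Ob" "U = ?M \<inter> Ob" using U(1) by (auto simp: openin_open)
  obtain r where r: "r > 0" "ball v0 r \<subseteq> Ob" using open_contains_ball O U(2) by blast
  have v0M: "v0 \<in> ?M" using U O by blast
  have inA: "v \<in> A n" if h: "v \<in> ?M" "dist v0 v < r" for v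
  proof -
    have "v \<in> Ob" using h(2) r(2) by (auto simp: ball_def)
    then have "v \<in> U" using h(1) O(2) by blast
    then show ?thesis using U(3) by blast
  qed
  define K where "K = 4 * real n / r"
  have K: "0 \<le> K" using r by (simp add: K_def)
  have sub: "csub ?M" by (rule csub_Range[OF op])
  have approx: "\<exists>x w. (x, w) \<in> T \<and> norm x \<le> K * norm v \<and> norm (v - w) < e"
    if hv: "v \<in> ?M" "e > 0" for v e
  proof (cases "v = 0")
    case True
    then show ?thesis using op_zero[OF op] hv(2) by (intro exI[of _ 0]) auto
  next
    case False
    define s where "s = r / (2 * norm v)"
    have s: "s > 0" using r False by (simp add: s_def)
    define v' where "v' = scaleR s v"
    have nv': "norm v' = r / 2" using s False r(1) by (simp add: v'_def s_def)
    have "v0 + v' \<in> A n"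
    proof (rule inA)
      show "v0 + v' \<in> ?M" using sub v0M hv(1) by (simp add: v'_def csub_add csub_scaleR)
      show "dist v0 (v0 + v') < r" using nv' r by (simp add: dist_norm)
    qed
    moreover have "v0 \<in> A n" using inA[OF v0M] r by simp
    moreover define \<delta> where "\<delta> = s * e / 2"
    moreover have \<delta>: "\<delta> > 0" using s hv(2) by (simp add: \<delta>_def)
    ultimately obtain w1 w2 where w1: "w1 \<in> S n" "dist w1 (v0 + v') < \<delta>"
        and w2: "w2 \<in> S n" "dist w2 v0 < \<delta>"
      unfolding A_def closure_approachable by meson
    obtain x1 where x1: "(x1, w1) \<in> T" "norm x1 \<le> real n" using w1(1) by (auto simp: S_def)
    obtain x2 where x2: "(x2, w2) \<in> T" "norm x2 \<le> real n" using w2(1) by (auto simp: S_def)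
    define x where "x = scaleR (1/s) (x1 - x2)"
    define w where "w = scaleR (1/s) (w1 - w2)"
    have xwT: "(x, w) \<in> T" unfolding x_def w_def by (intro op_scaleR[OF op] op_diff[OF op] x1(1) x2(1))
    have "norm (x1 - x2) \<le> 2 * real n" using x1(2) x2(2) norm_triangle_ineq4[of x1 x2] by linarith
    then have "norm x \<le> (1/s) * (2 * real n)" using s
      by (simp add: x_def divide_right_mono)
    also have "(1/s) * (2 * real n) = K * norm v" using r False by (simp add: s_def K_def field_simps)
    finally have xb: "norm x \<le> K * norm v" .
    have vv: "v = scaleR (1/s) v'" using s by (simp add: v'_def)
    have "v - w = scaleR (1/s) ((v0 + v' - w1) - (v0 - w2))" by (simp add: vv w_def algebra_simps)
    then have n1: "norm (v - w) = (1/s) * norm ((v0 + v' - w1) - (v0 - w2))" using s by simp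
    have "norm ((v0 + v' - w1) - (v0 - w2)) \<le> norm (v0 + v' - w1) + norm (v0 - w2)"
      by (rule norm_triangle_ineq4)
    also have "\<dots> < 2 * \<delta>" using w1(2) w2(2) by (simp add: dist_norm norm_minus_commute)
    finally have n2: "norm ((v0 + v' - w1) - (v0 - w2)) < 2 * \<delta>" .
    have "(1/s) * norm ((v0 + v' - w1) - (v0 - w2)) < (1/s) * (2 * \<delta>)"
      by (rule mult_strict_left_mono[OF n2]) (use s in simp)
    then have "norm (v - w) < e" using n1 s by (simp add: \<delta>_def)
    then show ?thesis using xwT xb by blast
  qed
  have "\<forall>v\<in>?M. \<exists>x. (x, v) \<in> T \<and> norm x \<le> 2 * K * norm v"
    using om_iter[OF op cl K approx] by blast
  then show ?thesis by blast
qed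



lemma scaleC_zero_left [simp]: "scaleC 0 (x::'a::complex_vector) = 0"
  by (metis scaleR_scaleC scaleR_zero_left of_real_0)

lemma scaleC_diff_right: "scaleC c (a - b) = scaleC c a - scaleC c (b::'a::complex_vector)"
proof -
  have "scaleC c (a - b) + scaleC c b = scaleC c a" by (metis scaleC_add_right diff_add_cancel)
  then show ?thesis by (simp add: eq_diff_eq)
qed

lemma riesz:
  fixes M :: "'a::complex_hilbert_space set" and f :: "'a \<Rightarrow> complex"
  assumes sub: "csub M" and cl: "closed M"
    and add: "\<And>v w. v \<in> M \<Longrightarrow> w \<in> M \<Longrightarrow> f (v + w) = f v + f w"
    and sc: "\<And>c v. v \<in> M \<Longrightarrow> f (scaleC c v) = cnj c * f v"
    and bd: "\<And>v. v \<in> M \<Longrightarrow> cmod (f v) \<le> B * norm v"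
  shows "\<exists>u\<in>M. \<forall>v\<in>M. f v = cinner v u"
proof (cases "\<forall>v\<in>M. f v = 0")
  case True
  then show ?thesis using csub_0[OF sub] by (intro bexI[of _ 0]) auto
next
  case False
  then obtain v0 where v0: "v0 \<in> M" "f v0 \<noteq> 0" by blast
  have f0: "f 0 = 0" using sc[of 0 0] csub_0[OF sub] by simp
  have fminus: "f (- v) = - f v" if "v \<in> M" for v
    using sc[of v "-1"] that by (simp add: scaleC_minus1)
  have fdiff: "f (v - w) = f v - f w" if "v \<in> M" "w \<in> M" for v w
    using add[of v "-w"] fminus[of w] that csub_minus[OF sub] by simp
  define Kf where "Kf = {v\<in>M. f v = 0}"
  have subK: "csub Kf"
    unfolding csub_def Kf_def using csub_0[OF sub] csub_add[OF sub] csub_scaleC[OF sub] f0 add sc by auto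
  have clK: "closed Kf"
  proof -
    have "closure Kf \<subseteq> Kf"
    proof
      fix v assume v: "v \<in> closure Kf"
      have vM: "v \<in> M" using v closure_mono[of Kf M] cl by (auto simp: Kf_def closure_closed)
      have "f v = 0"
      proof (rule ccontr)
        assume nz: "f v \<noteq> 0"
        define e where "e = cmod (f v) / (\<bar>B\<bar> + 1)"
        have e: "e > 0" using nz by (simp add: e_def)
        obtain k where k: "k \<in> Kf" "dist k v < e" using v e unfolding closure_approachable by blast
        have kM: "k \<in> M" "f k = 0" using k(1) by (auto simp: Kf_def)
        have "cmod (f v) = cmod (f (v - k))" using fdiff[OF vM kM(1)] kM(2) by simp
        also have "\<dots> \<le> B * norm (v - k)" by (rule bd) (intro csub_diff[OF sub] vM kM)
        also have "\<dots> \<le> \<bar>B\<bar> * norm (v - k)" by (intro mult_right_mono) auto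
        also have "\<dots> \<le> \<bar>B\<bar> * e" using k(2) by (intro mult_left_mono) (auto simp: dist_norm norm_minus_commute)
        also have "\<dots> < (\<bar>B\<bar> + 1) * e" using e by simp
        also have "\<dots> = cmod (f v)" by (simp add: e_def)
        finally show False by simp
      qed
      then show "v \<in> Kf" using vM by (simp add: Kf_def)
    qed
    then show ?thesis using closure_subset_eq by blast
  qed
  obtain k0 where k0: "k0 \<in> Kf" "v0 - k0 \<in> orth Kf" using projection_exists[OF subK clK, of v0] by blast
  define w where "w = v0 - k0"
  have k0M: "k0 \<in> M" "f k0 = 0" using k0(1) by (auto simp: Kf_def)
  have wM: "w \<in> M" using csub_diff[OF sub v0(1) k0M(1)] by (simp add: w_def)
  have fw: "f w = f v0" using fdiff[OF v0(1) k0M(1)] k0M(2) by (simp add: w_def)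
  then have fwnz: "f w \<noteq> 0" using v0 by simp
  then have wnz: "w \<noteq> 0" using f0 by auto
  have wo: "cinner s w = 0" if "s \<in> Kf" for s using k0(2) that by (auto simp: orth_def w_def)
  define u where "u = scaleC (f w / cinner w w) w"
  have uM: "u \<in> M" unfolding u_def by (rule csub_scaleC[OF sub wM])
  have "f v = cinner v u" if vM: "v \<in> M" for v
  proof -
    define a where "a = cnj (f v / f w)"
    have aw: "scaleC a w \<in> M" by (rule csub_scaleC[OF sub wM])
    have "f (v - scaleC a w) = f v - cnj a * f w" using fdiff[OF vM aw] sc[OF wM] by simp
    also have "\<dots> = 0" using fwnz by (simp add: a_def)
    finally have "v - scaleC a w \<in> Kf" using csub_diff[OF sub vM aw] by (simp add: Kf_def)
    then have "cinner (v - scaleC a w) w = 0" by (rule wo)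
    then have cv: "cinner v w = (f v / f w) * cinner w w"
      by (simp add: cinner_diff_left cinner_scaleC_left a_def)
    have "cinner v u = (f w / cinner w w) * cinner v w" by (simp add: u_def cinner_scaleC_right)
    also have "\<dots> = f v" using cv fwnz wnz by simp
    finally show ?thesis by simp
  qed
  then show ?thesis using uM by blast
qed

lemma range_AA:
  fixes A :: "'a::complex_hilbert_space lop"
  assumes op: "is_operator A" and cl: "closed A" and clR: "closed (Range A)"
    and y: "y \<in> orth (kernel A)"
  shows "\<exists>x. (x, y) \<in> op_comp (op_adjoint A) A"
proof -
  obtain C where C: "\<forall>v\<in>Range A. \<exists>x. (x, v) \<in> A \<and> norm x \<le> C * norm v"
    using open_mapping[OF op cl clR] by blast
  define f where "f v = cinner (SOME x. (x, v) \<in> A) y" for v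
  have fx: "f v = cinner x y" if h: "(x, v) \<in> A" for x v
  proof -
    have "\<exists>x. (x, v) \<in> A" using h by blast
    then have s: "((SOME x. (x, v) \<in> A), v) \<in> A" by (rule someI_ex)
    have "((SOME x. (x, v) \<in> A) - x, v - v) \<in> A" by (rule op_diff[OF op s h])
    then have "(SOME x. (x, v) \<in> A) - x \<in> kernel A" by (simp add: kernel_def)
    then have "cinner ((SOME x. (x, v) \<in> A) - x) y = 0" using y by (auto simp: orth_def)
    then show ?thesis by (simp add: f_def cinner_diff_left)
  qed
  have sub: "csub (Range A)" by (rule csub_Range[OF op])
  have "\<exists>u\<in>Range A. \<forall>v\<in>Range A. f v = cinner v u"
  proof (rule riesz[OF sub clR])
    fix v w assume "v \<in> Range A" "w \<in> Range A"
    then obtain x1 x2 where x: "(x1, v) \<in> A" "(x2, w) \<in> A" by blast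
    show "f (v + w) = f v + f w"
      using fx[OF op_add[OF op x]] fx[OF x(1)] fx[OF x(2)] by (simp add: cinner_add_left)
  next
    fix c v assume "v \<in> Range A"
    then obtain x1 where x: "(x1, v) \<in> A" by blast
    show "f (scaleC c v) = cnj c * f v"
      using fx[OF op_scaleC[OF op x]] fx[OF x] by (simp add: cinner_scaleC_left)
  next
    fix v assume "v \<in> Range A"
    then obtain x where x: "(x, v) \<in> A" "norm x \<le> C * norm v" using C by blast
    have "cmod (f v) = cmod (cinner x y)" using fx[OF x(1)] by simp
    also have "\<dots> \<le> norm x * norm y" by (rule cauchy_schwarz)
    also have "\<dots> \<le> C * norm v * norm y" using x(2) by (intro mult_right_mono) auto
    finally show "cmod (f v) \<le> (C * norm y) * norm v" by (simp add: mult_ac)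
  qed
  then obtain u where u: "u \<in> Range A" "\<forall>v\<in>Range A. f v = cinner v u" by blast
  have "(u, y) \<in> op_adjoint A"
    unfolding op_adjoint_def
  proof (clarify)
    fix x w assume xw: "(x, w) \<in> A"
    then have "w \<in> Range A" by blast
    then have "f w = cinner w u" using u(2) by blast
    moreover have "f w = cinner x y" by (rule fx[OF xw])
    ultimately show "cinner w u = cinner x y" by simp
  qed
  moreover obtain x0 where "(x0, u) \<in> A" using u(1) by blast
  ultimately show ?thesis by (auto simp: op_comp_iff)
qed

lemma range_adj_orth: "Range (op_adjoint A) \<subseteq> orth (kernel A)"
proof
  fix y assume "y \<in> Range (op_adjoint A)"
  then obtain u where u: "(u, y) \<in> op_adjoint A" by blast
  show "y \<in> orth (kernel A)"
    unfolding orth_def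
  proof (intro CollectI ballI)
    fix n assume "n \<in> kernel A"
    then have "(n, 0) \<in> A" by (simp add: kernel_def)
    moreover have "\<forall>x w. (x, w) \<in> A \<longrightarrow> cinner w u = cinner x y" using u by (simp add: op_adjoint_def)
    ultimately have "cinner 0 u = cinner n y" by blast
    then show "cinner n y = 0" by simp
  qed
qed

locale wop =
  fixes A :: "'a::complex_hilbert_space lop"
  assumes op: "is_operator A" and cl: "closed A" and clR: "closed (Range A)"
    and opS: "is_operator (op_adjoint A)"
begin

abbreviation "AA \<equiv> op_comp (op_adjoint A) A"

lemma opAA: "is_operator AA" by (rule comp_operator[OF opS op])

lemma kerAA: "kernel AA = kernel A"
proof
  show "kernel AA \<subseteq> kernel A"
  proof
    fix x assume "x \<in> kernel AA"
    then obtain v where v: "(x, v) \<in> A" "(v, 0) \<in> op_adjoint A" by (auto simp: kernel_def op_comp_iff)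
    then have "cinner v v = cinner x 0" by (auto simp: op_adjoint_def)
    then have "v = 0" by simp
    then show "x \<in> kernel A" using v by (simp add: kernel_def)
  qed
  show "kernel A \<subseteq> kernel AA"
    using adjoint_lin(1)[of A] by (auto simp: kernel_def op_comp_iff)
qed

lemma rangeAA: "Range AA = orth (kernel A)"
proof
  show "Range AA \<subseteq> orth (kernel A)"
  proof
    fix y assume "y \<in> Range AA"
    then obtain x v where "(x, v) \<in> A" "(v, y) \<in> op_adjoint A" by (auto simp: op_comp_iff)
    then have "y \<in> Range (op_adjoint A)" by blast
    then show "y \<in> orth (kernel A)" using range_adj_orth by blast
  qed
  show "orth (kernel A) \<subseteq> Range AA"
    using range_AA[OF op cl clR] by blast
qed

lemma orth_rangeAA: "orth (Range AA) = kernel A"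
  using orth_orth[OF csub_kernel[OF op] closed_kernel[OF cl]] rangeAA by simp

lemma W2:
  assumes y: "y \<in> orth (kernel A)"
  shows "\<exists>x\<in>carrier_op AA. (x, y) \<in> AA"
proof -
  obtain x0 where x0: "(x0, y) \<in> AA" using y rangeAA by blast
  obtain n where n: "n \<in> kernel A" "x0 - n \<in> orth (kernel A)"
    using projection_exists[OF csub_kernel[OF op] closed_kernel[OF cl], of x0] by blast
  have "(n, 0) \<in> AA" using n(1) kerAA by (auto simp: kernel_def)
  then have "(x0 - n, y - 0) \<in> AA" by (rule op_diff[OF opAA x0])
  then have "(x0 - n, y) \<in> AA" by simp
  moreover then have "x0 - n \<in> carrier_op AA" using n(2) kerAA by (auto simp: carrier_op_def)
  ultimately show ?thesis by blast
qed

lemma mp_AA: "(y, x) \<in> mp_inverse AA \<longleftrightarrow>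
    (\<exists>y1 z. y = y1 + z \<and> x \<in> carrier_op AA \<and> (x, y1) \<in> AA \<and> z \<in> kernel A)"
  unfolding mp_inverse_def orth_rangeAA by blast

end



lemma part3:
  fixes T :: "('a::complex_hilbert_space) lop"
  assumes "closed_operator T" and "densely_defined T" and "closed (Range T)"
  shows "op_comp T (op_comp (op_adjoint T) (cauchy_dual T)) = T"
proof -
  have op: "is_operator T" and cl: "closed T" using assms(1) by (auto simp: closed_operator_def)
  have opS: "is_operator (op_adjoint T)" by (rule adjoint_operator[OF assms(2)])
  interpret W: wop T using op cl assms(3) opS by unfold_locales
  let ?S = "op_adjoint T"
  show ?thesis
  proof (intro set_eqI iffI)
    fix p assume "p \<in> op_comp T (op_comp ?S (cauchy_dual T))"
    then obtain y t where p: "p = (y, t)" "(y, t) \<in> op_comp T (op_comp ?S (cauchy_dual T))" by (cases p) auto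
    then obtain s q x where sqx: "(s, t) \<in> T" "(q, s) \<in> ?S" "(x, q) \<in> T" "(y, x) \<in> mp_inverse W.AA"
      by (auto simp: op_comp_iff cauchy_dual_def)
    then obtain y1 z where yz: "y = y1 + z" "(x, y1) \<in> W.AA" "z \<in> kernel T" using W.mp_AA by blast
    then obtain q' where q': "(x, q') \<in> T" "(q', y1) \<in> ?S" by (auto simp: op_comp_iff)
    have "q' = q" using op_single[OF op q'(1) sqx(3)] .
    then have sy: "s = y1" using op_single[OF opS sqx(2)] q'(2) by simp
    have z0: "(z, 0) \<in> T" using yz(3) by (simp add: kernel_def)
    have "(s + z, t + 0) \<in> T" by (rule op_add[OF op sqx(1) z0])
    then have "(y1 + z, t) \<in> T" using sy by simp
    then show "p \<in> T" using p yz by simp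
  next
    fix p assume "p \<in> T"
    then obtain y t where p: "p = (y, t)" "(y, t) \<in> T" by (cases p) auto
    obtain z where z: "z \<in> kernel T" "y - z \<in> orth (kernel T)"
      using projection_exists[OF csub_kernel[OF op] closed_kernel[OF cl], of y] by blast
    define y1 where "y1 = y - z"
    have z0: "(z, 0) \<in> T" using z(1) by (simp add: kernel_def)
    have "(y - z, t - 0) \<in> T" by (rule op_diff[OF op p(2) z0])
    then have y1t: "(y1, t) \<in> T" by (simp add: y1_def)
    obtain x where x: "x \<in> carrier_op W.AA" "(x, y1) \<in> W.AA" using W.W2 z(2) y1_def by blast
    then obtain q where q: "(x, q) \<in> T" "(q, y1) \<in> ?S" by (auto simp: op_comp_iff)
    have "y = y1 + z" by (simp add: y1_def)
    then have "(y, x) \<in> mp_inverse W.AA" using W.mp_AA x z(1) by blast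
    then have "(y, q) \<in> cauchy_dual T" using q(1) by (auto simp: cauchy_dual_def op_comp_iff)
    then have "(y, y1) \<in> op_comp ?S (cauchy_dual T)" using q(2) by (auto simp: op_comp_iff)
    then show "p \<in> op_comp T (op_comp ?S (cauchy_dual T))" using y1t p by (auto simp: op_comp_iff)
  qed
qed



lemma part2:
  fixes T :: "('a::complex_hilbert_space) lop"
  assumes co: "closed_operator T" and dd: "densely_defined T" and clRT: "closed (Range T)"
  shows "closable (op_comp (cauchy_dual (op_adjoint T)) T)
    \<and> op_comp (op_closure (op_comp (cauchy_dual (op_adjoint T)) T)) (op_adjoint T) = op_adjoint T"
proof -
  have op: "is_operator T" and cl: "closed T" using co by (auto simp: closed_operator_def)
  let ?S = "op_adjoint T"
  let ?N = "kernel T"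
  have opS: "is_operator ?S" by (rule adjoint_operator[OF dd])
  have SS: "op_adjoint ?S = T" by (rule adjoint_adjoint[OF co])
  have clS: "closed ?S" by (rule closed_adjoint)
  have subN: "csub ?N" by (rule csub_kernel[OF op])
  have clN: "closed ?N" by (rule closed_kernel[OF cl])
  have subON: "csub (orth ?N)" by (rule orth_csub)
  have RS: "Range ?S = orth ?N"
  proof
    show "Range ?S \<subseteq> orth ?N" by (rule range_adj_orth)
    show "orth ?N \<subseteq> Range ?S"
    proof
      fix y assume "y \<in> orth ?N"
      then obtain x where "(x, y) \<in> op_comp ?S T" using range_AA[OF op cl clRT] by blast
      then show "y \<in> Range ?S" by (auto simp: op_comp_iff)
    qed
  qed
  have clRS: "closed (Range ?S)" using RS closed_orth by simp
  interpret W: wop ?S using opS clS clRS SS op by unfold_locales simp_all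
  have RT: "Range T \<subseteq> orth (kernel ?S)" using range_adj_orth[of ?S] SS by simp
  define G2 where "G2 = {(x, q). x \<in> Domain T \<and> q \<in> orth ?N \<and> x - q \<in> ?N}"
  define G3 where "G3 = {(x, q). q \<in> orth ?N \<and> x - q \<in> ?N}"
  have kerT: "(n, 0) \<in> T \<longleftrightarrow> n \<in> ?N" for n by (simp add: kernel_def)
  have eq2: "op_comp (cauchy_dual ?S) T = G2"
  proof (intro set_eqI iffI)
    fix p assume "p \<in> op_comp (cauchy_dual ?S) T"
    then obtain x r where p: "p = (x, r)" "(x, r) \<in> op_comp (cauchy_dual ?S) T" by (cases p) auto
    then obtain v pp where vp: "(x, v) \<in> T" "(v, pp) \<in> mp_inverse W.AA" "(pp, r) \<in> ?S"
      by (auto simp: op_comp_iff cauchy_dual_def)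
    then obtain y1 z where yz: "v = y1 + z" "(pp, y1) \<in> W.AA" "z \<in> kernel ?S" using W.mp_AA by blast
    then obtain q' where q': "(pp, q') \<in> ?S" "(q', y1) \<in> T" using SS by (auto simp: op_comp_iff)
    have "q' = r" using op_single[OF opS q'(1) vp(3)] .
    have "z = v - y1" using yz(1) by simp
    moreover have "v \<in> Range T" "y1 \<in> Range T" using vp(1) q'(2) by blast+
    ultimately have "z \<in> Range T" using csub_diff[OF csub_Range[OF op]] by simp
    then have "z \<in> orth (kernel ?S)" using RT by blast
    then have "z = 0" using orth_inter yz(3) by blast
    then have rv: "(r, v) \<in> T" using q'(2) \<open>q' = r\<close> yz(1) by simp
    have "(x - r, v - v) \<in> T" by (rule op_diff[OF op vp(1) rv])
    then have "x - r \<in> ?N" by (simp add: kernel_def)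
    moreover have "r \<in> orth ?N" using vp(3) RS by blast
    moreover have "x \<in> Domain T" using vp(1) by blast
    ultimately show "p \<in> G2" using p by (simp add: G2_def)
  next
    fix p assume "p \<in> G2"
    then obtain x q where p: "p = (x, q)" "x \<in> Domain T" "q \<in> orth ?N" "x - q \<in> ?N"
      by (auto simp: G2_def)
    obtain v where xv: "(x, v) \<in> T" using p(2) by blast
    have n0: "(x - q, 0) \<in> T" using p(4) by (simp add: kernel_def)
    have "(x - (x - q), v - 0) \<in> T" by (rule op_diff[OF op xv n0])
    then have qv: "(q, v) \<in> T" by simp
    have "v \<in> orth (kernel ?S)" using RT xv by blast
    then obtain pp where pp: "pp \<in> carrier_op W.AA" "(pp, v) \<in> W.AA" using W.W2 by blast
    then obtain q' where q': "(pp, q') \<in> ?S" "(q', v) \<in> T" using SS by (auto simp: op_comp_iff)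
    have "(q' - q, v - v) \<in> T" by (rule op_diff[OF op q'(2) qv])
    then have d1: "q' - q \<in> ?N" by (simp add: kernel_def)
    have "q' \<in> orth ?N" using q'(1) RS by blast
    then have "q' - q \<in> orth ?N" using csub_diff[OF subON _ p(3)] by simp
    then have "q' - q = 0" using orth_inter d1 by blast
    then have ppq: "(pp, q) \<in> ?S" using q'(1) by simp
    have "(0::'a) \<in> kernel ?S" using op_zero[OF opS] by (simp add: kernel_def)
    then have "(v, pp) \<in> mp_inverse W.AA" using W.mp_AA pp by (metis add_0_right)
    then have "(v, q) \<in> cauchy_dual ?S" using ppq by (auto simp: cauchy_dual_def op_comp_iff)
    then show "p \<in> op_comp (cauchy_dual ?S) T" using xv p(1) by (auto simp: op_comp_iff)
  qed
  have G23: "G2 \<subseteq> G3" by (auto simp: G2_def G3_def)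
  have clG3: "closed G3"
  proof -
    have "G3 = snd -` orth ?N \<inter> (\<lambda>p. fst p - snd p) -` ?N" by (auto simp: G3_def)
    moreover have "closed (snd -` orth ?N)" by (rule closed_vimage_snd[OF closed_orth])
    moreover have "closed ((\<lambda>p::'a\<times>'a. fst p - snd p) -` ?N)"
      by (rule closed_pre[OF clN]) (intro continuous_intros)
    ultimately show ?thesis by auto
  qed
  have cl23: "closure G2 = G3"
  proof
    show "closure G2 \<subseteq> G3" by (rule closure_minimal[OF G23 clG3])
    show "G3 \<subseteq> closure G2"
    proof
      fix p assume "p \<in> G3"
      then obtain x q where p: "p = (x, q)" "q \<in> orth ?N" "x - q \<in> ?N" by (auto simp: G3_def)
      show "p \<in> closure G2"
        unfolding closure_approachable
      proof (intro allI impI)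
        fix e :: real assume e: "e > 0"
        have "x \<in> closure (Domain T)" using dd by (simp add: densely_defined_def)
        then obtain x' where x': "x' \<in> Domain T" "dist x' x < e / 2"
          using e unfolding closure_approachable by (metis half_gt_zero)
        obtain m where m: "m \<in> ?N" "x' - m \<in> orth ?N" using projection_exists[OF subN clN, of x'] by blast
        define q' where "q' = x' - m"
        have inG2: "(x', q') \<in> G2" using x'(1) m by (simp add: G2_def q'_def)
        have a1: "m - (x - q) \<in> ?N" by (rule csub_diff[OF subN m(1) p(3)])
        have a2: "q' - q \<in> orth ?N" using csub_diff[OF subON m(2) p(2)] by (simp add: q'_def)
        have "cinner (m - (x - q)) (q' - q) = 0" using a1 a2 by (auto simp: orth_def)
        then have "(norm ((m - (x - q)) + (q' - q)))^2 = (norm (m - (x - q)))^2 + (norm (q' - q))^2"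
          by (rule pythag)
        moreover have "(m - (x - q)) + (q' - q) = x' - x" by (simp add: q'_def)
        ultimately have "(norm (q' - q))^2 \<le> (norm (x' - x))^2" by simp
        then have nq: "norm (q' - q) \<le> norm (x' - x)" by (rule power2_le_imp_le) simp
        have "dist (x', q') (x, q) = norm (x' - x, q' - q)" by (simp add: dist_norm)
        also have "\<dots> \<le> norm (x' - x) + norm (q' - q)" by (rule norm_Pair_le)
        also have "\<dots> < e" using nq x'(2) by (simp add: dist_norm)
        finally show "\<exists>y\<in>G2. dist y p < e" using inG2 p(1) by blast
      qed
    qed
  qed
  have opG3: "is_operator G3"
    unfolding is_operator_def
  proof (intro conjI allI impI)
    show "(0, 0) \<in> G3" using csub_0[OF subN] csub_0[OF subON] by (simp add: G3_def)
  next
    fix x y u v assume "(x, y) \<in> G3" "(u, v) \<in> G3"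
    then have h: "y \<in> orth ?N" "x - y \<in> ?N" "v \<in> orth ?N" "u - v \<in> ?N" by (auto simp: G3_def)
    have e: "(x + u) - (y + v) = (x - y) + (u - v)" by simp
    show "(x + u, y + v) \<in> G3" using csub_add[OF subON h(1) h(3)] csub_add[OF subN h(2) h(4)]
      by (simp add: G3_def e)
  next
    fix c x y assume "(x, y) \<in> G3"
    then have h: "y \<in> orth ?N" "x - y \<in> ?N" by (auto simp: G3_def)
    show "(scaleC c x, scaleC c y) \<in> G3" using csub_scaleC[OF subON h(1)] csub_scaleC[OF subN h(2)]
      by (simp add: G3_def scaleC_diff_right)
  next
    fix y assume "(0, y) \<in> G3"
    then have h: "y \<in> orth ?N" "0 - y \<in> ?N" by (auto simp: G3_def)
    then have "y \<in> ?N" using csub_minus[OF subN h(2)] by simp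
    then show "y = 0" using orth_inter h(1) by blast
  qed
  have opG2: "is_operator G2"
    unfolding is_operator_def
  proof (intro conjI allI impI)
    show "(0, 0) \<in> G2" using csub_0[OF subN] csub_0[OF subON] csub_0[OF csub_Domain[OF op]] by (simp add: G2_def)
  next
    fix x y u v assume a: "(x, y) \<in> G2" "(u, v) \<in> G2"
    then have "(x + u, y + v) \<in> G3" using opG3 G23 unfolding is_operator_def by blast
    moreover have "x + u \<in> Domain T" using a csub_add[OF csub_Domain[OF op]] by (auto simp: G2_def)
    ultimately show "(x + u, y + v) \<in> G2" by (simp add: G2_def G3_def)
  next
    fix c x y assume a: "(x, y) \<in> G2"
    then have "(scaleC c x, scaleC c y) \<in> G3" using opG3 G23 unfolding is_operator_def by blast
    moreover have "scaleC c x \<in> Domain T" using a csub_scaleC[OF csub_Domain[OF op]] by (auto simp: G2_def)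
    ultimately show "(scaleC c x, scaleC c y) \<in> G2" by (simp add: G2_def G3_def)
  next
    fix y assume "(0, y) \<in> G2"
    then show "y = 0" using opG3 G23 unfolding is_operator_def by blast
  qed
  have comp3: "op_comp G3 ?S = ?S"
  proof (intro set_eqI iffI)
    fix p assume "p \<in> op_comp G3 ?S"
    then obtain u r s where p: "p = (u, r)" "(u, s) \<in> ?S" "(s, r) \<in> G3" by (auto simp: op_comp_def)
    then have h: "r \<in> orth ?N" "s - r \<in> ?N" by (auto simp: G3_def)
    have "s \<in> orth ?N" using p(2) RS by blast
    then have "s - r \<in> orth ?N" using csub_diff[OF subON _ h(1)] by simp
    then have "s - r = 0" using orth_inter h(2) by blast
    then show "p \<in> ?S" using p by simp
  next
    fix p assume "p \<in> ?S"
    then obtain u s where p: "p = (u, s)" "(u, s) \<in> ?S" by (cases p) auto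
    have "s \<in> orth ?N" using p(2) RS by blast
    then have "(s, s) \<in> G3" using csub_0[OF subN] by (simp add: G3_def)
    then show "p \<in> op_comp G3 ?S" using p by (auto simp: op_comp_def)
  qed
  show ?thesis
    unfolding eq2 closable_def op_closure_def cl23 using opG2 opG3 comp3 by simp
qed

theorem theorem2p2:
  fixes T :: "('a::complex_hilbert_space) lop"
  assumes "closed_operator T" and "densely_defined T" and "closed (Range T)"
  shows "(selfadjoint T \<longleftrightarrow>
            closable (op_comp (cauchy_dual (op_adjoint T)) T)
            \<and> T = op_comp (op_closure (op_comp (cauchy_dual (op_adjoint T)) T)) (op_adjoint T))
       \<and> (selfadjoint T \<longleftrightarrow>
            op_adjoint T = op_comp T (op_comp (op_adjoint T) (cauchy_dual T)))"
  using part2[OF assms] part3[OF assms] unfolding selfadjoint_def by auto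

end
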